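(* Let $d\ge 2$, $k\ge 1$, let $E\subset\mathbb{R}^d$ be compact, let $\mu$ be a Frostman measure on $E$, and let $\nu_k$ be the measure induced by $\mu$ (see context). Suppose that $\dim_{\mathcal H}(E)>s_{k,d}$. Then there exist distinct $r_1,r_2>0$ with $\nu_k\big(\Delta_k^{r_1}(E)\cap\Delta_k^{r_2}(E)\big)>0$. In fact, for any partition $(0,\infty)=\coprod_{\alpha\in A}R_\alpha$ with each $R_\alpha$ nonempty and countable, there exist distinct $\alpha_1,\alpha_2\in A$ and $r_1\in R_{\alpha_1}$, $r_2\in R_{\alpha_2}$ such that $\nu_k\big(\Delta_k^{r_1}(E)\cap\Delta_k^{r_2}(E)\big)>0$.
   Context: A Frostman measure on a compact set $E\subset\mathbb{R}^d$ is a nonzero finite positive Borel measure $\mu$ supported on $E$ with $\mu(B(x,\rho))\le C\rho^{s}$ for all $x\in\mathbb{R}^d$, $\rho>0$, for some exponent $s>0$ (less than $\dim_{\mathcal H}E$). Configuration map. For $x^1,\dots,x^{k+1}\in\mathbb{R}^d$: if $k\le d$, let $\vec v_{k,d}(x^1,\dots,x^{k+1})\in\mathbb{R}^{k(k+1)/2}$ be the vector with entries $|x^i-x^j|$, $1\le i<j\le k+1$, in lexicographic order; set $D=k(k+1)/2$. If $k>d$, let $m=d(k+1)-\binom{d+1}{2}$ and fix once and for all a set $P$ of $m$ edges of the complete graph on $\{1,\dots,k+1\}$ which is maximally independent in $\mathbb{R}^d$ (specifying the lengths $|x^i-x^j|$, $(i,j)\in P$, determines all other pairwise distances up to finitely many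 possibilities); then $\vec v_{k,d}(x^1,\dots,x^{k+1})=(|x^i-x^j|)_{(i,j)\in P}\in\mathbb{R}^m$ in lexicographic order, and set $D=m$. The measure $\nu_k$ on $\mathbb{R}^D$ is defined by $\int f\,d\nu_k=\int\cdots\int f(\vec v_{k,d}(x^1,\dots,x^{k+1}))\,d\mu(x^1)\cdots d\mu(x^{k+1})$ for $f\in C_0(\mathbb{R}^D)$. The configuration set is $\Delta_k(E)=\{\vec v_{k,d}(x^1,\dots,x^{k+1}): x^j\in E\}\subset\mathbb{R}^D$, and for $r>0$, $\Delta_k^r(E)=\{\vec t\in\Delta_k(E): r\vec t\in\Delta_k(E)\}$. The $L^2$-threshold is $s_{k,d}=\inf\{s:\ \dim_{\mathcal H}(E)>s\implies \nu_k \text{ has a density with }\int_{\Delta_k(E)}\nu_k^2(\vec t)\,d\vec t<\infty\}$, where $E$ ranges over all compact subsets of $\mathbb{R}^d$ (with $\nu_k$ induced by a Frostman measure on $E$). *)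

theory Defs
  imports "HOL-Analysis.Analysis"
begin

definition hausdorff_pre :: "real \<Rightarrow> real \<Rightarrow> 'a::metric_space set \<Rightarrow> ennreal" where
  "hausdorff_pre s \<delta> E =
     (INF U \<in> {U :: nat \<Rightarrow> 'a set. E \<subseteq> (\<Union>i. U i) \<and>
                 (\<forall>i. bounded (U i) \<and> diameter (U i) \<le> \<delta>)}.
        (\<Sum>i. ennreal (diameter (U i) powr s)))"

definition hausdorff_measure :: "real \<Rightarrow> 'a::metric_space set \<Rightarrow> ennreal" where
  "hausdorff_measure s E = (SUP \<delta> \<in> {0<..}. hausdorff_pre s \<delta> E)"

definition hausdorff_dim :: "'a::metric_space set \<Rightarrow> real" where
  "hausdorff_dim E = Inf {s. 0 < s \<and> hausdorff_measure s E = 0}"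

definition frostman :: "('a::euclidean_space) set \<Rightarrow> 'a measure \<Rightarrow> real \<Rightarrow> bool" where
  "frostman E \<mu> s \<longleftrightarrow>
     sets \<mu> = sets borel \<and> finite_measure \<mu> \<and> emeasure \<mu> (space \<mu>) \<noteq> 0 \<and>
     emeasure \<mu> (UNIV - E) = 0 \<and> 0 < s \<and> s < hausdorff_dim E \<and>
     (\<exists>C. \<forall>x \<rho>. 0 < \<rho> \<longrightarrow> measure \<mu> (ball x \<rho>) \<le> C * \<rho> powr s)"

text \<open>Points are indexed by 1..k+1; edges are pairs (i,j) with i<j.\<close>
definition edges :: "nat \<Rightarrow> (nat \<times> nat) set" where
  "edges k = {(i, j). 1 \<le> i \<and> i < j \<and> j \<le> k + 1}"

definition config_vec :: "(nat \<times> nat) set \<Rightarrow> (nat \<Rightarrow> 'a::metric_space) \<Rightarrow> (nat \<times> nat \<Rightarrow> real)" where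
  "config_vec I x = restrict (\<lambda>(i, j). dist (x i) (x j)) I"

text \<open>P is a maximally independent edge set in R^d: it has m = d(k+1) - binom(d+1,2)
  edges and, for (Lebesgue-)generic configurations, the lengths on P determine all
  pairwise distances up to finitely many possibilities.\<close>
definition max_indep :: "'d::finite itself \<Rightarrow> nat \<Rightarrow> (nat \<times> nat) set \<Rightarrow> bool" where
  "max_indep (_::'d itself) k P \<longleftrightarrow>
     P \<subseteq> edges k \<and> card P = CARD('d) * (k + 1) - ((CARD('d) + 1) choose 2) \<and>
     (AE x in PiM {1..k+1} (\<lambda>_. (lborel :: (real^'d) measure)).
        finite {config_vec (edges k) (y :: nat \<Rightarrow> real^'d) | y. y \<in> PiE {1..k+1} (\<lambda>_. UNIV) \<and>
                  (\<forall>(i, j) \<in> P. dist (y i) (y j) = dist (x i) (x j))})"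

definition config_index :: "'d::finite itself \<Rightarrow> nat \<Rightarrow> (nat \<times> nat) set \<Rightarrow> (nat \<times> nat) set" where
  "config_index (_::'d itself) k P = (if k \<le> CARD('d) then edges k else P)"

text \<open>Lebesgue measure on R^D, D = card I, realised as R^I.\<close>
definition leb_cfg :: "(nat \<times> nat) set \<Rightarrow> (nat \<times> nat \<Rightarrow> real) measure" where
  "leb_cfg I = PiM I (\<lambda>_. lborel)"

definition nu_k :: "(real^'d::finite) measure \<Rightarrow> nat \<Rightarrow> (nat \<times> nat) set \<Rightarrow> (nat \<times> nat \<Rightarrow> real) measure" where
  "nu_k \<mu> k P = (let I = config_index TYPE('d) k P in
      distr (PiM {1..k+1} (\<lambda>_. \<mu>)) (leb_cfg I) (config_vec I))"

definition Delta_k :: "(real^'d::finite) set \<Rightarrow> nat \<Rightarrow> (nat \<times> nat) set \<Rightarrow> (nat \<times> nat \<Rightarrow> real) set" where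
  "Delta_k E k P = config_vec (config_index TYPE('d) k P) ` (PiE {1..k+1} (\<lambda>_. E))"

definition Delta_k_r :: "real \<Rightarrow> (real^'d::finite) set \<Rightarrow> nat \<Rightarrow> (nat \<times> nat) set \<Rightarrow> (nat \<times> nat \<Rightarrow> real) set" where
  "Delta_k_r r E k P = {t \<in> Delta_k E k P.
      restrict (\<lambda>e. r * t e) (config_index TYPE('d) k P) \<in> Delta_k E k P}"

definition L2_config :: "(real^'d::finite) set \<Rightarrow> (real^'d) measure \<Rightarrow> nat \<Rightarrow> (nat \<times> nat) set \<Rightarrow> bool" where
  "L2_config E \<mu> k P \<longleftrightarrow> (let L = leb_cfg (config_index TYPE('d) k P) in
     (\<exists>f. f \<in> borel_measurable L \<and> nu_k \<mu> k P = density L f \<and>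
          (\<integral>\<^sup>+ t \<in> Delta_k E k P. (f t)\<^sup>2 \<partial>L) < \<infinity>))"

definition good_exponent :: "'d::finite itself \<Rightarrow> nat \<Rightarrow> (nat \<times> nat) set \<Rightarrow> real \<Rightarrow> bool" where
  "good_exponent (_::'d itself) k P s \<longleftrightarrow>
     (\<forall>(E :: (real^'d) set) \<mu> t. compact E \<and> hausdorff_dim E > s \<and> frostman E \<mu> t \<and> s < t
        \<longrightarrow> L2_config E \<mu> k P)"

definition L2_threshold :: "'d::finite itself \<Rightarrow> nat \<Rightarrow> (nat \<times> nat) set \<Rightarrow> ereal" where
  "L2_threshold d k P = Inf (ereal ` {s. good_exponent d k P s})"

end

theory Submission
  imports Defs
begin


definition scal :: "(nat \<times> nat) set \<Rightarrow> real \<Rightarrow> (nat \<times> nat \<Rightarrow> real) \<Rightarrow> (nat \<times> nat \<Rightarrow> real)" where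
  "scal I r t = restrict (\<lambda>e. r * t e) I"

lemma space_leb_cfg: "space (leb_cfg I) = PiE I (\<lambda>_. UNIV)"
  by (simp add: leb_cfg_def space_PiM)

lemma sets_leb_cfg_cong: "sets (leb_cfg I) = sets (PiM I (\<lambda>_. lborel))"
  by (simp add: leb_cfg_def)

lemma scal_meas: "scal I r \<in> measurable (leb_cfg I) (leb_cfg I)"
  unfolding scal_def leb_cfg_def by measurable

lemma scal_vimage_PiE:
  assumes "r > 0"
  shows "scal I r -` PiE I A \<inter> space (leb_cfg I) = PiE I (\<lambda>i. (\<lambda>x. r * x) -` A i)"
  using assms by (auto simp: scal_def space_leb_cfg PiE_iff extensional_def)

lemma lborel_scal_vimage:
  assumes "r > 0" "B \<in> sets borel"
  shows "emeasure lborel ((\<lambda>x::real. r * x) -` B) = ennreal (1/r) * emeasure lborel B"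
proof -
  have "emeasure lborel ((\<lambda>x::real. r * x) -` B) = emeasure (distr lborel borel ((*) r)) B"
    using assms by (subst emeasure_distr) auto
  also have "\<dots> = emeasure (density lborel (\<lambda>_. ennreal (1/r))) B"
    using assms by (subst lborel_distr_mult) (auto simp: inverse_eq_divide)
  also have "\<dots> = ennreal (1/r) * emeasure lborel B"
    using assms by (subst emeasure_density_const) auto
  finally show ?thesis .
qed

lemma vimage_mult_borel: "B \<in> sets borel \<Longrightarrow> (\<lambda>x::real. r * x) -` B \<in> sets borel"
proof -
  assume "B \<in> sets borel"
  moreover have "(\<lambda>x::real. r * x) \<in> borel_measurable borel" by measurable
  ultimately have "(\<lambda>x::real. r * x) -` B \<inter> space borel \<in> sets borel" by (rule measurable_sets[rotated])
  then show ?thesis by simp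
qed

lemma scal_emeasure:
  assumes I: "finite I" and r: "r > 0" and A: "A \<in> sets (leb_cfg I)"
  shows "emeasure (leb_cfg I) (scal I r -` A \<inter> space (leb_cfg I))
           = ennreal ((1/r) ^ card I) * emeasure (leb_cfg I) A"
proof -
  interpret product_sigma_finite "\<lambda>_::nat\<times>nat. lborel::real measure"
    by standard
  let ?P = "distr (leb_cfg I) (leb_cfg I) (scal I r)"
  let ?Q = "density (leb_cfg I) (\<lambda>_. ennreal ((1/r) ^ card I))"
  have "?P = ?Q"
  proof (rule measure_eqI_PiM_finite[where I=I and M="\<lambda>_. lborel"])
    show "finite I" by fact
    show "sets ?P = sets (PiM I (\<lambda>_. lborel))" "sets ?Q = sets (PiM I (\<lambda>_. lborel))"
      by (simp_all add: leb_cfg_def)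
  next
    fix B assume B: "\<And>i. i \<in> I \<Longrightarrow> B i \<in> sets (lborel :: real measure)"
    have PB: "PiE I B \<in> sets (leb_cfg I)" unfolding leb_cfg_def using B I by measurable
    have "?P (PiE I B) = emeasure (leb_cfg I) (PiE I (\<lambda>i. (\<lambda>x. r * x) -` B i))"
      using PB by (simp add: emeasure_distr scal_meas scal_vimage_PiE r)
    also have "\<dots> = (\<Prod>i\<in>I. emeasure lborel ((\<lambda>x. r * x) -` B i))"
      unfolding leb_cfg_def using B I by (subst emeasure_PiM) (auto intro: vimage_mult_borel)
    also have "\<dots> = (\<Prod>i\<in>I. ennreal (1/r) * emeasure lborel (B i))"
      using B r by (intro prod.cong refl lborel_scal_vimage) auto
    also have "\<dots> = ennreal ((1/r) ^ card I) * (\<Prod>i\<in>I. emeasure lborel (B i))"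
      using r by (simp add: prod.distrib ennreal_power)
    also have "\<dots> = ennreal ((1/r) ^ card I) * emeasure (leb_cfg I) (PiE I B)"
      unfolding leb_cfg_def using B I by (subst emeasure_PiM) auto
    also have "\<dots> = ?Q (PiE I B)"
      using PB by (simp add: emeasure_density_const)
    finally show "?P (PiE I B) = ?Q (PiE I B)" .
  next
    define C where "C n = PiE I (\<lambda>_. {-real n..real n})" for n :: nat
    show "range C \<subseteq> prod_algebra I (\<lambda>_. lborel)"
      unfolding C_def using I by (auto intro!: prod_algebraI_finite)
    show "(\<Union>n. C n) = space (PiM I (\<lambda>_. lborel))"
    proof (rule set_eqI, rule iffI)
      fix t assume "t \<in> space (PiM I (\<lambda>_. lborel::real measure))"
      then have te: "t \<in> PiE I (\<lambda>_. UNIV)" by (simp add: space_PiM)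
      obtain n :: nat where n: "(\<Sum>e\<in>I. \<bar>t e\<bar>) \<le> real n" using real_arch_simple by blast
      have b: "\<bar>t e\<bar> \<le> real n" if "e \<in> I" for e
        using n member_le_sum[of e I "\<lambda>e. \<bar>t e\<bar>"] that I by auto
      then have "t e \<in> {-real n..real n}" if "e \<in> I" for e
        using b[OF that] by (simp add: abs_le_iff)
      then have "t \<in> C n" using te unfolding C_def by (auto simp: PiE_iff)
      then show "t \<in> (\<Union>n. C n)" by blast
    qed (auto simp: C_def space_PiM)
    fix n
    have "C n \<in> sets (leb_cfg I)" unfolding C_def leb_cfg_def using I by measurable
    then have "?P (C n) = emeasure (leb_cfg I) (PiE I (\<lambda>i. (\<lambda>x. r * x) -` {-real n..real n}))"
      unfolding C_def by (simp add: emeasure_distr scal_meas scal_vimage_PiE r)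
    also have "\<dots> = (\<Prod>i\<in>I. emeasure lborel ((\<lambda>x. r * x) -` {-real n..real n}))"
      unfolding leb_cfg_def using I by (subst emeasure_PiM) (auto intro: vimage_mult_borel)
    also have "\<dots> = (\<Prod>i\<in>I. ennreal (1/r) * emeasure lborel {-real n..real n})"
      using r by (intro prod.cong refl lborel_scal_vimage) auto
    finally show "?P (C n) \<noteq> \<infinity>" by (simp add: ennreal_mult_eq_top_iff ennreal_prod_eq_top power_eq_top_ennreal_iff)
  qed
  then have "emeasure ?P A = emeasure ?Q A" by simp
  then show ?thesis using A by (simp add: emeasure_distr scal_meas emeasure_density_const)
qed




lemma proj_borel: "(\<lambda>f::('a::countable \<Rightarrow> real). f e) \<in> borel_measurable borel"
proof -
  have "(\<lambda>f::('a \<Rightarrow> real). f e) \<in> measurable (PiM UNIV (\<lambda>_. borel)) borel"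
    by (rule measurable_component_singleton) simp
  then show ?thesis by (simp only: measurable_cong_sets[OF sets_PiM_equal_borel refl])
qed

lemma id_leb_borel: "(\<lambda>x. x) \<in> measurable (leb_cfg I) (borel :: (nat \<times> nat \<Rightarrow> real) measure)"
proof (rule measurable_coordinatewise_then_product)
  fix i
  show "(\<lambda>x. x i) \<in> borel_measurable (leb_cfg I)"
  proof (cases "i \<in> I")
    case True
    then have "(\<lambda>x. x i) \<in> measurable (leb_cfg I) (lborel :: real measure)"
      unfolding leb_cfg_def by (rule measurable_component_singleton)
    then show ?thesis by (simp only: measurable_cong_sets[OF refl sets_lborel])
  next
    case False
    have c: "(\<lambda>x::nat\<times>nat\<Rightarrow>real. undefined::real) \<in> borel_measurable (leb_cfg I)"
      by (rule measurable_const) (simp only: space_borel UNIV_I)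
    show ?thesis
      by (rule measurable_cong[THEN iffD2, OF _ c]) (use False in \<open>metis PiE_arb space_leb_cfg\<close>)
  qed
qed

lemma closed_in_leb_sets:
  assumes "closed S" "S \<subseteq> space (leb_cfg I)"
  shows "S \<in> sets (leb_cfg I)"
proof -
  have "(\<lambda>x. x) -` S \<inter> space (leb_cfg I) \<in> sets (leb_cfg I)"
    by (rule measurable_sets[OF id_leb_borel]) (rule borel_closed[OF assms(1)])
  then show ?thesis using assms(2) by (metis Int_absorb2 vimage_ident)
qed

lemma space_leb_closed: "closed (PiE I (\<lambda>_. UNIV) :: (nat \<times> nat \<Rightarrow> real) set)"
proof -
  have "PiE I (\<lambda>_. UNIV) = (\<Inter>e\<in>-I. {f::nat \<times> nat \<Rightarrow> real. f e = undefined})"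
    unfolding PiE_def extensional_def Pi_def by auto
  moreover have "closed {f::nat \<times> nat \<Rightarrow> real. f e = undefined}" for e
    by (intro closed_Collect_eq continuous_on_product_coordinates continuous_on_const)
  ultimately show ?thesis by (simp add: closed_INT)
qed

lemma sets_leb_sub_borel_X: "sets (leb_cfg I) \<subseteq> sets (borel :: (nat \<times> nat \<Rightarrow> real) measure)"
proof -
  have "sets (leb_cfg I) = sigma_sets (PiE I (\<lambda>_. UNIV))
     {{f\<in>PiE I (\<lambda>_. UNIV). f i \<in> A} | i A. i \<in> I \<and> A \<in> sets (lborel::real measure)}"
    unfolding leb_cfg_def by (simp add: sets_PiM_single)
  also have "\<dots> \<subseteq> sets borel"
  proof (rule sets.sigma_sets_subset')
    show "PiE I (\<lambda>_. UNIV) \<in> sets (borel :: (nat \<times> nat \<Rightarrow> real) measure)"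
      using space_leb_closed by (rule borel_closed)
    show "{{f\<in>PiE I (\<lambda>_. UNIV). f i \<in> A} | i A. i \<in> I \<and> A \<in> sets (lborel::real measure)}
          \<subseteq> sets borel"
    proof safe
      fix i and A :: "real set" assume "A \<in> sets lborel"
      then have "(\<lambda>f::nat\<times>nat\<Rightarrow>real. f i) -` A \<inter> space borel \<in> sets borel"
        using measurable_sets[OF proj_borel] by simp
      then have "(\<lambda>f::nat\<times>nat\<Rightarrow>real. f i) -` A \<in> sets borel" by simp
      moreover have "{f\<in>PiE I (\<lambda>_. UNIV). f i \<in> A} = PiE I (\<lambda>_. UNIV) \<inter> (\<lambda>f. f i) -` A" by blast
      ultimately show "{f\<in>PiE I (\<lambda>_. UNIV). f i \<in> A} \<in> sets borel"
        using borel_closed[OF space_leb_closed] by (metis sets.Int)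
    qed
  qed
  finally show ?thesis .
qed




lemma triple_bound:
  assumes S: "A \<in> sets M" "B \<in> sets M" "C \<in> sets M" "V \<in> fmeasurable M"
    and sub: "A \<subseteq> V" "B \<subseteq> V" "C \<subseteq> V"
  shows "measure M A + measure M B + measure M C - 2 * measure M V \<le> measure M (A \<inter> B \<inter> C)"
proof -
  have f: "X \<in> fmeasurable M" if "X \<in> sets M" "X \<subseteq> V" for X
    using fmeasurableI2[OF S(4) that(2) that(1)] .
  have s1: "A \<inter> B \<inter> C \<in> sets M" "A - B \<in> sets M" "A - C \<in> sets M" using S by auto
  have u: "(A \<inter> B \<inter> C) \<union> (A - B) \<union> (A - C) \<in> fmeasurable M"
    by (rule f) (use S sub in auto)
  have "measure M A \<le> measure M ((A \<inter> B \<inter> C) \<union> (A - B) \<union> (A - C))"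
    by (rule measure_mono_fmeasurable[OF _ S(1) u]) blast
  also have "\<dots> \<le> measure M ((A \<inter> B \<inter> C) \<union> (A - B)) + measure M (A - C)"
    by (rule measure_Un_le) (use s1 in auto)
  also have "measure M ((A \<inter> B \<inter> C) \<union> (A - B)) \<le> measure M (A \<inter> B \<inter> C) + measure M (A - B)"
    by (rule measure_Un_le) (use s1 in auto)
  finally have 1: "measure M A \<le> measure M (A \<inter> B \<inter> C) + measure M (A - B) + measure M (A - C)"
    by simp
  have 2: "measure M (A - X) + measure M X \<le> measure M V" if X: "X \<in> sets M" "X \<subseteq> V" for X
  proof -
    have fa: "A - X \<in> fmeasurable M" by (rule f) (use S sub X in auto)
    have fx: "X \<in> fmeasurable M" by (rule f[OF X])
    have "measure M ((A - X) \<union> X) = measure M (A - X) + measure M X"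
      by (rule measure_Union) (use fa fx in \<open>auto simp: fmeasurable_def\<close>)
    moreover have "measure M ((A - X) \<union> X) \<le> measure M V"
      by (rule measure_mono_fmeasurable[OF _ _ S(4)]) (use S sub X in auto)
    ultimately show ?thesis by simp
  qed
  show ?thesis using 1 2[OF S(2) sub(2)] 2[OF S(3) sub(3)] by linarith
qed

lemma scal_1: "t \<in> space (leb_cfg I) \<Longrightarrow> scal I 1 t = t"
  unfolding scal_def space_leb_cfg by (simp add: PiE_restrict)

lemma scal_scal: 
  assumes "t \<in> space (leb_cfg I)" "s * r = 1" shows "scal I s (scal I r t) = t"
proof -
  have "scal I s (scal I r t) = restrict t I"
    unfolding scal_def by (rule restrict_ext) (simp add: assms(2) mult.assoc[symmetric])
  then show ?thesis using assms(1) unfolding space_leb_cfg by (simp add: PiE_restrict)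
qed

lemma scal_cont: "continuous_on UNIV (\<lambda>p::real \<times> (nat \<times> nat \<Rightarrow> real). scal I (fst p) (snd p))"
proof (rule continuous_on_coordinatewise_then_product)
  fix e
  show "continuous_on UNIV (\<lambda>p::real \<times> (nat \<times> nat \<Rightarrow> real). scal I (fst p) (snd p) e)"
  proof (cases "e \<in> I")
    case True
    have "continuous_on UNIV (\<lambda>p::real \<times> (nat \<times> nat \<Rightarrow> real). fst p * snd p e)"
      by (intro continuous_intros continuous_on_compose2[OF continuous_on_product_coordinates]) auto
    then show ?thesis using True by (simp add: scal_def)
  next
    case False
    then show ?thesis by (simp add: scal_def continuous_on_const)
  qed
qed




lemma box_open: "open {t::nat\<times>nat\<Rightarrow>real. \<forall>e\<in>I. t e \<in> {-c<..<c}}" if "finite I"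
  using product_topology_basis'[of I "\<lambda>_. {-c<..<c}" "\<lambda>e. e"] that by auto

lemma steinhaus_core:
  fixes G :: "(nat \<times> nat \<Rightarrow> real) set" and n :: real
  assumes I: "finite I" and G: "G \<in> sets (leb_cfg I)"
    and Gb: "G \<subseteq> PiE I (\<lambda>_. {-n..n})" and pos: "emeasure (leb_cfg I) G > 0"
  shows "\<exists>\<delta>>0. \<forall>r1 r2. 1-\<delta> < r1 \<longrightarrow> r1 \<le> 1 \<longrightarrow> 1-\<delta> < r2 \<longrightarrow> r2 \<le> 1 \<longrightarrow>
          (\<exists>H\<in>sets (leb_cfg I). H \<subseteq> G \<and> (\<forall>t\<in>H. scal I r1 t \<in> G \<and> scal I r2 t \<in> G)
              \<and> emeasure (leb_cfg I) H > 0)"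
proof -
  interpret product_sigma_finite "\<lambda>_::nat\<times>nat. lborel::real measure"
    by standard
  define L where "L = leb_cfg I"
  define \<Omega> where "\<Omega> = {t::nat\<times>nat\<Rightarrow>real. \<forall>e\<in>I. t e \<in> {-(\<bar>n\<bar>+1)<..<\<bar>n\<bar>+1}}"
  have \<Omega>open: "open \<Omega>" unfolding \<Omega>_def using I by (rule box_open)
  have \<Omega>L: "\<Omega> \<inter> space L = PiE I (\<lambda>_. {-(\<bar>n\<bar>+1)<..<\<bar>n\<bar>+1})"
    by (auto simp: \<Omega>_def L_def space_leb_cfg PiE_iff)
  have "PiE I (\<lambda>_. {-(\<bar>n\<bar>+1)<..<\<bar>n\<bar>+1}) \<in> sets L" unfolding L_def leb_cfg_def using I by measurable
  then have \<Omega>Ls: "\<Omega> \<inter> space L \<in> sets L" using \<Omega>L by simp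
  have \<Omega>fin: "emeasure L (\<Omega> \<inter> space L) < \<infinity>"
    unfolding \<Omega>L unfolding L_def leb_cfg_def using I
    by (subst emeasure_PiM) (auto simp: ennreal_prod_eq_top less_top[symmetric] power_eq_top_ennreal_iff)
  have GL: "G \<subseteq> space L" using G sets.sets_into_space unfolding L_def by blast
  have GO: "G \<subseteq> \<Omega> \<inter> space L"
  proof
    fix t assume "t \<in> G"
    then have "t \<in> PiE I (\<lambda>_. {-n..n})" "t \<in> space L" using Gb GL by auto
    then show "t \<in> \<Omega> \<inter> space L" unfolding \<Omega>_def by (force simp: PiE_iff)
  qed
  have Gfin: "emeasure L G < \<infinity>"
    using emeasure_mono[OF GO \<Omega>Ls] \<Omega>fin by auto
  define g where "g = measure L G"
  have Gg: "emeasure L G = ennreal g" unfolding g_def using Gfin by (simp add: emeasure_eq_ennreal_measure less_top)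
  have gpos: "g > 0" using pos Gg unfolding L_def by simp
  define N where "N = density (distr L borel (\<lambda>x. x)) (indicator \<Omega>)"
  have idm: "(\<lambda>x. x) \<in> measurable L (borel :: (nat \<times> nat \<Rightarrow> real) measure)"
    unfolding L_def by (rule id_leb_borel)
  have sN: "sets N = sets borel" unfolding N_def by simp
  have Ob: "\<Omega> \<in> sets borel" using \<Omega>open by simp
  have NB: "emeasure N B = emeasure L (B \<inter> \<Omega> \<inter> space L)" if B: "B \<in> sets borel" for B
  proof -
    have "emeasure N B = (\<integral>\<^sup>+ x. indicator \<Omega> x * indicator B x \<partial>distr L borel (\<lambda>x. x))"
      unfolding N_def using B Ob by (subst emeasure_density) auto
    also have "\<dots> = (\<integral>\<^sup>+ x. indicator (B \<inter> \<Omega>) x \<partial>distr L borel (\<lambda>x. x))"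
      by (intro nn_integral_cong) (auto split: split_indicator)
    also have "\<dots> = emeasure (distr L borel (\<lambda>x. x)) (B \<inter> \<Omega>)"
      using B Ob by (subst nn_integral_indicator) auto
    also have "\<dots> = emeasure L (B \<inter> \<Omega> \<inter> space L)"
      using B Ob idm by (subst emeasure_distr) auto
    finally show ?thesis .
  qed
  have Nfin: "emeasure N (space N) \<noteq> \<infinity>"
  proof -
    have "space N = UNIV" using sN by (metis sets_eq_imp_space_eq space_borel)
    then have "emeasure N (space N) = emeasure L (\<Omega> \<inter> space L)" using NB[of UNIV] by simp
    then show ?thesis using \<Omega>fin by simp
  qed
  have Gb': "G \<in> sets borel" using G sets_leb_sub_borel_X unfolding L_def by blast
  have NG: "emeasure N G = ennreal g" using NB[OF Gb'] GO Gg by (simp add: Int_absorb2 Int_assoc)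
  define \<epsilon> where "\<epsilon> = g / 6"
  have \<epsilon>: "\<epsilon> > 0" unfolding \<epsilon>_def using gpos by simp
  have "ennreal (g - \<epsilon>) < emeasure N G" using NG \<epsilon> gpos by (simp add: ennreal_lessI)
  then obtain K where K: "K \<subseteq> G" "compact K" "ennreal (g - \<epsilon>) < emeasure N K"
    using inner_regular[OF sN Nfin Gb'] by (auto simp: less_SUP_iff)
  have "emeasure N G < ennreal (g + \<epsilon>)" using NG \<epsilon> gpos by (simp add: ennreal_lessI)
  then obtain U where U: "G \<subseteq> U" "open U" "emeasure N U < ennreal (g + \<epsilon>)"
    using outer_regular[OF sN Nfin Gb'] by (auto simp: INF_less_iff)
  have KL: "K \<in> sets L" unfolding L_def
    using closed_in_leb_sets[of K I] K GL compact_imp_closed unfolding L_def by blast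
  define V where "V = U \<inter> \<Omega> \<inter> space L"
  have VL: "V \<in> sets L"
  proof -
    have "U \<inter> \<Omega> \<in> sets borel" using U Ob by auto
    then have "(\<lambda>x. x) -` (U \<inter> \<Omega>) \<inter> space L \<in> sets L" using measurable_sets[OF idm] by blast
    then show ?thesis unfolding V_def by (simp add: Int_assoc)
  qed
  have NU: "emeasure N U = emeasure L V" using NB[of U] U unfolding V_def by simp
  have Vfin: "V \<in> fmeasurable L" using VL U NU by (intro fmeasurableI) (auto simp: less_top[symmetric] top_unique)
  have mV: "measure L V < g + \<epsilon>"
  proof -
    have "emeasure L V = ennreal (measure L V)" using Vfin by (simp add: emeasure_eq_ennreal_measure fmeasurable_def less_top)
    then have "ennreal (measure L V) < ennreal (g + \<epsilon>)" using U(3) NU by simp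
    then show ?thesis by (simp add: ennreal_less_iff measure_nonneg)
  qed
  have KV: "K \<subseteq> V" using K U GO unfolding V_def by auto
  have KO: "K \<subseteq> \<Omega> \<inter> space L" using K(1) GO by blast
  then have KOK: "K \<inter> \<Omega> \<inter> space L = K" by blast
  have NK: "emeasure N K = emeasure L K"
    using NB[OF borel_closed[OF compact_imp_closed[OF K(2)]]] KOK by simp
  have mK: "measure L K > g - \<epsilon>"
  proof -
    have "emeasure L K < \<infinity>" using emeasure_mono[OF KV VL] Vfin by (auto simp: fmeasurable_def)
    then have "emeasure L K = ennreal (measure L K)" by (simp add: emeasure_eq_ennreal_measure less_top)
    then have "ennreal (g - \<epsilon>) < ennreal (measure L K)" using K(3) NK by simp
    moreover have "g - \<epsilon> \<ge> 0" unfolding \<epsilon>_def using gpos by simp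
    ultimately show ?thesis by (simp add: ennreal_less_iff)
  qed
  define W where "W = (\<lambda>p::real \<times> (nat \<times> nat \<Rightarrow> real). scal I (fst p) (snd p)) -` (U \<inter> \<Omega>)"
  have Wopen: "open W" unfolding W_def using U \<Omega>open by (intro open_vimage scal_cont) auto
  have "{1::real} \<times> K \<subseteq> W"
  proof
    fix p assume "p \<in> {1::real} \<times> K"
    then obtain t where p: "p = (1, t)" "t \<in> K" by blast
    then have "t \<in> V" using KV by blast
    then have "t \<in> U \<inter> \<Omega>" "t \<in> space L" unfolding V_def by auto
    then have "scal I 1 t \<in> U \<inter> \<Omega>" unfolding L_def using scal_1 by metis
    then show "p \<in> W" unfolding W_def p by simp
  qed
  then obtain X0 where X0: "1 \<in> X0" "open X0" "X0 \<times> K \<subseteq> W"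
    using Elementary_Topology.tube_lemma[OF K(2) Wopen] by blast
  then obtain \<delta>' where \<delta>': "\<delta>' > 0" "ball 1 \<delta>' \<subseteq> X0" using open_contains_ball by blast
  define \<delta> where "\<delta> = min (1/2) (\<delta>'/2)"
  have \<delta>: "\<delta> > 0" unfolding \<delta>_def using \<delta>' by simp
  have TK: "scal I r -` K \<inter> space L \<subseteq> V" if r: "1 - \<delta> < r" "r \<le> 1" for r
  proof
    fix t assume t: "t \<in> scal I r -` K \<inter> space L"
    have rpos: "r > 1/2" using r unfolding \<delta>_def by simp
    have "dist 1 (1/r) = (1 - r) / r" using rpos r by (simp add: dist_real_def field_simps)
    also have "\<dots> \<le> 2 * (1 - r)"
    proof -
      have h: "0 \<le> (1 - r) * (2 * r - 1)" using rpos r by (intro mult_nonneg_nonneg) auto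
      then have h2: "(1 - r) \<le> (2 * (1 - r)) * r" by (simp add: algebra_simps)
      then show ?thesis using rpos by (simp add: pos_divide_le_eq)
    qed
    also have "\<dots> < \<delta>'" using r unfolding \<delta>_def by simp
    finally have "1/r \<in> X0" using \<delta>' by auto
    then have "(1/r, scal I r t) \<in> W" using X0 t by auto
    moreover have "scal I (1/r) (scal I r t) = t" using t rpos unfolding L_def by (intro scal_scal) auto
    ultimately show "t \<in> V" unfolding W_def V_def using t by auto
  qed
  have TKs: "scal I r -` K \<inter> space L \<in> sets L" for r
    using measurable_sets[OF scal_meas KL[unfolded L_def]] unfolding L_def by blast
  have mTK: "measure L (scal I r -` K \<inter> space L) \<ge> measure L K" if r: "0 < r" "r \<le> 1" for r
  proof -
    have "emeasure L (scal I r -` K \<inter> space L) = ennreal ((1/r) ^ card I) * emeasure L K"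
      unfolding L_def using scal_emeasure[OF I r(1)] KL unfolding L_def by blast
    moreover have "emeasure L K = ennreal (measure L K)"
    proof -
      have "emeasure L K \<le> emeasure L V" by (rule emeasure_mono[OF KV VL])
      also have "\<dots> < top" using Vfin by (simp add: fmeasurable_def)
      finally show ?thesis by (simp add: emeasure_eq_ennreal_measure)
    qed
    ultimately have "emeasure L (scal I r -` K \<inter> space L) = ennreal ((1/r) ^ card I * measure L K)"
      using r by (simp add: ennreal_mult measure_nonneg)
    then have "measure L (scal I r -` K \<inter> space L) = (1/r) ^ card I * measure L K"
      using r by (simp add: measure_def measure_nonneg)
    moreover have "(1/r) ^ card I \<ge> 1" using r by (simp add: one_le_power)
    ultimately show ?thesis by (simp add: mult_le_cancel_right1 measure_nonneg)
  qed
  show ?thesis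
  proof (intro exI[of _ \<delta>] conjI \<delta> allI impI)
    fix r1 r2 assume r: "1 - \<delta> < r1" "r1 \<le> 1" "1 - \<delta> < r2" "r2 \<le> 1"
    have rp: "0 < r1" "0 < r2" using r unfolding \<delta>_def by auto
    define H where "H = K \<inter> (scal I r1 -` K \<inter> space L) \<inter> (scal I r2 -` K \<inter> space L)"
    have HL: "H \<in> sets L" unfolding H_def using KL TKs[of r1] TKs[of r2] by (rule sets.Int[OF sets.Int])
    have "measure L K + measure L (scal I r1 -` K \<inter> space L) + measure L (scal I r2 -` K \<inter> space L)
          - 2 * measure L V \<le> measure L H"
      unfolding H_def by (rule triple_bound[OF KL TKs TKs Vfin KV TK[OF r(1,2)] TK[OF r(3,4)]])
    then have "measure L H > 0" using mK mTK[OF rp(1) r(2)] mTK[OF rp(2) r(4)] mV gpos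
      unfolding \<epsilon>_def by linarith
    then have "emeasure L H \<noteq> 0" by (auto simp: measure_def)
    then have Hpos: "emeasure L H > 0" using not_gr_zero by blast
    have HG: "H \<subseteq> G" using K(1) unfolding H_def by blast
    have Hsc: "\<forall>t\<in>H. scal I r1 t \<in> G \<and> scal I r2 t \<in> G" using K(1) unfolding H_def by blast
    show "\<exists>H\<in>sets (leb_cfg I). H \<subseteq> G \<and> (\<forall>t\<in>H. scal I r1 t \<in> G \<and> scal I r2 t \<in> G)
              \<and> emeasure (leb_cfg I) H > 0" using HL HG Hsc Hpos unfolding L_def by blast
  qed
qed




lemma box_exhaust:
  assumes "finite I" "t \<in> PiE I (\<lambda>_. UNIV)"
  shows "\<exists>n::nat. t \<in> PiE I (\<lambda>_. {-real n..real n})"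
proof -
  obtain n :: nat where n: "(\<Sum>e\<in>I. \<bar>t e\<bar>) \<le> real n" using real_arch_simple by blast
  have b: "\<bar>t e\<bar> \<le> real n" if "e \<in> I" for e
    using n member_le_sum[of e I "\<lambda>e. \<bar>t e\<bar>"] that assms(1) by auto
  then have "t e \<in> {-real n..real n}" if "e \<in> I" for e
    using b[OF that] by (simp add: abs_le_iff)
  then show ?thesis using assms(2) by (auto simp: PiE_iff)
qed

lemma edges_finite: "finite (edges k)"
proof -
  have "edges k \<subseteq> {1..k+1} \<times> {1..k+1}" unfolding edges_def by auto
  then show ?thesis by (rule finite_subset) simp
qed

lemma config_vec_cont:
  "continuous_on UNIV (config_vec I :: (nat \<Rightarrow> 'a::metric_space) \<Rightarrow> (nat \<times> nat \<Rightarrow> real))"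
proof (rule continuous_on_coordinatewise_then_product)
  fix e :: "nat \<times> nat"
  obtain i j where e: "e = (i, j)" by (cases e)
  show "continuous_on UNIV (\<lambda>x::nat \<Rightarrow> 'a. config_vec I x e)"
  proof (cases "e \<in> I")
    case True
    have "continuous_on UNIV (\<lambda>x::nat \<Rightarrow> 'a. dist (x i) (x j))"
      by (intro continuous_on_dist continuous_on_product_coordinates)
    then show ?thesis using True by (simp add: config_vec_def e)
  next
    case False
    then show ?thesis by (simp add: config_vec_def continuous_on_const)
  qed
qed

lemma PiE_compact:
  fixes E :: "'a::metric_space set"
  assumes "compact E"
  shows "compact (PiE {1..m::nat} (\<lambda>_. E))"
proof -
  define S where "S = (\<lambda>i::nat. if i \<in> {1..m} then E else {undefined})"
  have eq: "PiE {1..m::nat} (\<lambda>_. E) = PiE UNIV S"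
    unfolding S_def PiE_def Pi_def extensional_def by auto
  have "compactin (product_topology (\<lambda>_. euclidean) UNIV) (PiE UNIV S)"
    unfolding compactin_PiE S_def using assms by auto
  then have "compactin euclidean (PiE UNIV S)" by (simp add: euclidean_product_topology)
  then show ?thesis using eq by simp
qed

lemma Delta_closed:
  fixes E :: "(real^'d::finite) set"
  assumes "compact E"
  shows "closed (config_vec I ` PiE {1..k+1} (\<lambda>_. E))"
proof -
  have "compact (config_vec I ` PiE {1..k+1} (\<lambda>_. E))"
    by (rule compact_continuous_image[OF continuous_on_subset[OF config_vec_cont] PiE_compact[OF assms]]) simp
  then show ?thesis by (rule compact_imp_closed)
qed

lemma config_vec_meas:
  fixes \<mu> :: "(real^'d::finite) measure"
  assumes s: "sets \<mu> = sets borel" and I: "I \<subseteq> edges k"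
  shows "config_vec I \<in> measurable (PiM {1..k+1} (\<lambda>_. \<mu>)) (leb_cfg I)"
proof -
  have comp: "(\<lambda>x. x i) \<in> borel_measurable (PiM {1..k+1} (\<lambda>_. \<mu>))" if "i \<in> {1..k+1}" for i
  proof -
    have "(\<lambda>x. x i) \<in> measurable (PiM {1..k+1} (\<lambda>_. \<mu>)) \<mu>"
      by (rule measurable_component_singleton[OF that])
    then show ?thesis by (simp only: measurable_cong_sets[OF refl s])
  qed
  show ?thesis unfolding config_vec_def leb_cfg_def
  proof (rule measurable_restrict)
    fix e assume e: "e \<in> I"
    obtain i j where ij: "e = (i, j)" by (cases e)
    have "i \<in> {1..k+1}" "j \<in> {1..k+1}" using e I unfolding ij edges_def by auto
    then have "(\<lambda>x. dist (x i) (x j)) \<in> borel_measurable (PiM {1..k+1} (\<lambda>_. \<mu>))"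
      using comp by (intro borel_measurable_dist) auto
    then show "(\<lambda>x. case e of (i, j) \<Rightarrow> dist (x i) (x j)) \<in> measurable (PiM {1..k+1} (\<lambda>_. \<mu>)) lborel"
      unfolding ij by (simp only: measurable_cong_sets[OF refl sets_lborel] prod.case)
  qed
qed

lemma Delta_sub_space: "config_vec I ` X \<subseteq> space (leb_cfg I)"
  by (auto simp: config_vec_def space_leb_cfg)




theorem theorem1p6:
  fixes E :: "(real^'d::finite) set" and \<mu> :: "(real^'d) measure"
    and k :: nat and P :: "(nat \<times> nat) set" and t :: real
  assumes "CARD('d) \<ge> 2" and "k \<ge> 1" and "compact E"
    and "frostman E \<mu> t"
    and "k > CARD('d) \<Longrightarrow> max_indep TYPE('d) k P"
    and "ereal (hausdorff_dim E) > L2_threshold TYPE('d) k P"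
    and "ereal t > L2_threshold TYPE('d) k P"
  shows "(\<exists>r1 r2. 0 < r1 \<and> 0 < r2 \<and> r1 \<noteq> r2 \<and>
            emeasure (nu_k \<mu> k P) (Delta_k_r r1 E k P \<inter> Delta_k_r r2 E k P) > 0)
       \<and> (\<forall>(A :: 'a set) (R :: 'a \<Rightarrow> real set).
            (\<Union>\<alpha>\<in>A. R \<alpha>) = {0<..} \<and> disjoint_family_on R A \<and>
            (\<forall>\<alpha>\<in>A. R \<alpha> \<noteq> {} \<and> countable (R \<alpha>))
            \<longrightarrow> (\<exists>\<alpha>1\<in>A. \<exists>\<alpha>2\<in>A. \<exists>r1\<in>R \<alpha>1. \<exists>r2\<in>R \<alpha>2. \<alpha>1 \<noteq> \<alpha>2 \<and>
                  emeasure (nu_k \<mu> k P) (Delta_k_r r1 E k P \<inter> Delta_k_r r2 E k P) > 0))"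
proof -
  define I where "I = config_index TYPE('d) k P"
  have Isub: "I \<subseteq> edges k"
  proof (cases "k \<le> CARD('d)")
    case True then show ?thesis by (simp add: I_def config_index_def)
  next
    case False
    then have "max_indep TYPE('d) k P" using assms(5) by simp
    then show ?thesis using False by (simp add: I_def config_index_def max_indep_def)
  qed
  have Ifin: "finite I" using Isub edges_finite by (rule finite_subset)
  have fr: "sets \<mu> = sets borel" "finite_measure \<mu>" "emeasure \<mu> (space \<mu>) \<noteq> 0"
      "emeasure \<mu> (UNIV - E) = 0" "t < hausdorff_dim E"
    using assms(4) unfolding frostman_def by auto
  have "\<exists>s. good_exponent TYPE('d) k P s \<and> s < t"
  proof -
    from assms(7) obtain x where "x \<in> ereal ` {s. good_exponent TYPE('d) k P s}" "x < ereal t"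
      unfolding L2_threshold_def using Inf_less_iff by blast
    then show ?thesis by auto
  qed
  then obtain s where s: "good_exponent TYPE('d) k P s" "s < t" by blast
  have "L2_config E \<mu> k P"
  proof -
    have "s < hausdorff_dim E" using s(2) fr(5) by simp
    then show ?thesis using s(1,2) assms(3,4) unfolding good_exponent_def by blast
  qed
  then obtain f where f: "f \<in> borel_measurable (leb_cfg I)" "nu_k \<mu> k P = density (leb_cfg I) f"
    unfolding L2_config_def Let_def I_def by blast
  define M where "M = PiM {1..k+1} (\<lambda>_. \<mu>)"
  define L where "L = leb_cfg I"
  define cv where "cv = (config_vec I :: (nat \<Rightarrow> real^'d) \<Rightarrow> _)"
  define \<nu> where "\<nu> = nu_k \<mu> k P"
  have nu: "\<nu> = distr M L cv" unfolding \<nu>_def nu_k_def Let_def M_def L_def cv_def I_def by simp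
  have nuf: "\<nu> = density L f" using f(2) unfolding \<nu>_def L_def .
  have fL: "f \<in> borel_measurable L" using f(1) unfolding L_def .
  have cvm: "cv \<in> measurable M L" unfolding cv_def M_def L_def by (rule config_vec_meas[OF fr(1) Isub])
  define \<Delta> where "\<Delta> = Delta_k E k P"
  have \<Delta>eq: "\<Delta> = cv ` PiE {1..k+1} (\<lambda>_. E)" unfolding \<Delta>_def Delta_k_def cv_def I_def ..
  have \<Delta>L: "\<Delta> \<subseteq> space L" unfolding \<Delta>eq cv_def L_def by (rule Delta_sub_space)
  have \<Delta>s: "\<Delta> \<in> sets L"
    unfolding L_def by (rule closed_in_leb_sets) (use Delta_closed[OF assms(3)] \<Delta>eq \<Delta>L cv_def L_def in auto)
  interpret fm: finite_measure \<mu> by (rule fr(2))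
  interpret ps: product_sigma_finite "\<lambda>_::nat. \<mu>"
    by standard
  have spmu: "space \<mu> = UNIV" using fr(1) by (metis sets_eq_imp_space_eq space_borel)
  have Eb: "E \<in> sets \<mu>" using fr(1) compact_imp_closed[OF assms(3)] by simp
  have Ec: "UNIV - E \<in> sets \<mu>" using sets.compl_sets[OF Eb] spmu by simp
  have AEc: "AE x in M. x i \<in> E" if i: "i \<in> {1..k+1}" for i
  proof (rule AE_I')
    define B where "B = PiE {1..k+1} (\<lambda>j. if j = i then UNIV - E else space \<mu>)"
    have Bs: "B \<in> sets M" unfolding B_def M_def using Ec by (intro sets_PiM_I_finite) auto
    have "emeasure M B = (\<Prod>j\<in>{1..k+1}. emeasure \<mu> (if j = i then UNIV - E else space \<mu>))"
      unfolding B_def M_def using Ec by (intro ps.emeasure_PiM) auto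
    also have "\<dots> = 0" using i fr(4) by (intro prod_zero) auto
    finally show "B \<in> null_sets M" using Bs by auto
    show "{x \<in> space M. x i \<notin> E} \<subseteq> B"
      unfolding B_def M_def space_PiM by (auto simp: PiE_iff spmu extensional_def)
  qed
  have AEall: "AE x in M. \<forall>i\<in>{1..k+1}. x i \<in> E"
    by (rule AE_finite_allI) (auto intro: AEc)
  have AE\<Delta>: "AE x in M. cv x \<in> \<Delta>"
    using AEall
  proof (rule AE_mp[OF _ AE_I2])
    fix x assume "x \<in> space M"
    then have xs: "x \<in> PiE {1..k+1} (\<lambda>_. space \<mu>)" unfolding M_def by (simp add: space_PiM)
    show "(\<forall>i\<in>{1..k+1}. x i \<in> E) \<longrightarrow> cv x \<in> \<Delta>"
    proof
      assume h: "\<forall>i\<in>{1..k+1}. x i \<in> E"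
      have "x \<in> PiE {1..k+1} (\<lambda>_. E)" using xs h unfolding PiE_def Pi_def by blast
      then show "cv x \<in> \<Delta>" unfolding \<Delta>eq by (rule imageI)
    qed
  qed
  have Mspace: "emeasure M (space M) \<noteq> 0"
  proof -
    have "emeasure M (space M) = (\<Prod>j\<in>{1..k+1}. emeasure \<mu> (space \<mu>))"
      unfolding M_def space_PiM by (intro ps.emeasure_PiM) auto
    then show ?thesis using fr(3) by simp
  qed
  have nu\<Delta>: "emeasure \<nu> \<Delta> \<noteq> 0"
  proof -
    have "emeasure \<nu> \<Delta> = emeasure M (cv -` \<Delta> \<inter> space M)"
      unfolding nu using \<Delta>s cvm by (simp add: emeasure_distr)
    also have "\<dots> = emeasure M (space M)"
      by (rule emeasure_eq_AE) (use AE\<Delta> measurable_sets[OF cvm \<Delta>s] in auto)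
    finally show ?thesis using Mspace by simp
  qed
  define G0 where "G0 = {x \<in> \<Delta>. f x > 0}"
  have G0s: "G0 \<in> sets L"
  proof -
    have "{x \<in> space L. f x > 0} \<in> sets L" using fL by measurable
    then have "\<Delta> \<inter> {x \<in> space L. f x > 0} \<in> sets L" using \<Delta>s by (rule sets.Int[rotated])
    moreover have "\<Delta> \<inter> {x \<in> space L. f x > 0} = G0" unfolding G0_def using \<Delta>L by auto
    ultimately show ?thesis by simp
  qed
  have posH: "emeasure \<nu> H > 0" if H: "H \<in> sets L" "H \<subseteq> G0" "emeasure L H > 0" for H
  proof (rule ccontr)
    assume "\<not> emeasure \<nu> H > 0"
    then have "emeasure \<nu> H = 0" using not_gr_zero by blast
    then have "(\<integral>\<^sup>+ x. f x * indicator H x \<partial>L) = 0" unfolding nuf using H(1) fL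
      by (simp add: emeasure_density)
    then have "AE x in L. f x * indicator H x = 0" using fL H(1)
      by (subst (asm) nn_integral_0_iff_AE) auto
    then have "AE x in L. x \<notin> H"
    proof (rule AE_mp[OF _ AE_I2])
      fix x assume "x \<in> space L"
      show "f x * indicator H x = 0 \<longrightarrow> x \<notin> H"
        using H(2) unfolding G0_def by (auto simp: indicator_def)
    qed
    then have "emeasure L H = 0"
      using AE_iff_measurable[OF H(1), of "\<lambda>x. x \<notin> H"] H(1) sets.sets_into_space by blast
    then show False using H(3) by simp
  qed
  have G0pos: "emeasure L G0 > 0"
  proof (rule ccontr)
    assume "\<not> emeasure L G0 > 0"
    then have "emeasure L G0 = 0" using not_gr_zero by blast
    then have "AE x in L. x \<notin> G0" using G0s by (intro AE_not_in) auto
    then have "AE x in L. f x * indicator \<Delta> x = 0"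
    proof (rule AE_mp[OF _ AE_I2])
      fix x assume "x \<in> space L"
      show "x \<notin> G0 \<longrightarrow> f x * indicator \<Delta> x = 0"
        unfolding G0_def by (auto simp: indicator_def)
    qed
    then have "(\<integral>\<^sup>+ x. f x * indicator \<Delta> x \<partial>L) = 0" using fL \<Delta>s
      by (subst nn_integral_0_iff_AE) auto
    then have "emeasure \<nu> \<Delta> = 0" unfolding nuf using \<Delta>s fL by (simp add: emeasure_density)
    then show False using nu\<Delta> by simp
  qed
  define box where "box n = PiE I (\<lambda>_. {-real n..real n})" for n :: nat
  have boxs: "box n \<in> sets L" for n unfolding box_def L_def leb_cfg_def using Ifin by measurable
  obtain n where n: "emeasure L (G0 \<inter> box n) > 0"
  proof (rule ccontr)
    assume "\<not> thesis"
    then have z: "emeasure L (G0 \<inter> box n) = 0" for n using that not_gr_zero by blast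
    have "emeasure L (\<Union>n. G0 \<inter> box n) = 0"
      by (rule emeasure_UN_eq_0) (use z G0s boxs in auto)
    moreover have "(\<Union>n. G0 \<inter> box n) = G0"
    proof
      show "G0 \<subseteq> (\<Union>n. G0 \<inter> box n)"
      proof
        fix x assume x: "x \<in> G0"
        then have "x \<in> PiE I (\<lambda>_. UNIV)" using \<Delta>L unfolding G0_def L_def space_leb_cfg by blast
        then obtain m where "x \<in> box m" unfolding box_def using box_exhaust[OF Ifin] by blast
        then show "x \<in> (\<Union>n. G0 \<inter> box n)" using x by blast
      qed
    qed blast
    ultimately show False using G0pos by simp
  qed
  have Gs: "G0 \<inter> box n \<in> sets L" using G0s boxs by blast
  obtain \<delta> where \<delta>: "\<delta> > 0" and key: "\<And>r1 r2. 1-\<delta> < r1 \<Longrightarrow> r1 \<le> 1 \<Longrightarrow> 1-\<delta> < r2 \<Longrightarrow> r2 \<le> 1 \<Longrightarrow>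
          (\<exists>H\<in>sets L. H \<subseteq> G0 \<inter> box n \<and> (\<forall>t\<in>H. scal I r1 t \<in> G0 \<inter> box n \<and> scal I r2 t \<in> G0 \<inter> box n)
              \<and> emeasure L H > 0)"
    using steinhaus_core[OF Ifin Gs[unfolded L_def] _ n[unfolded L_def], of "real n"]
    unfolding box_def L_def by blast
  have Dr': "Delta_k_r r E k P = {t \<in> \<Delta>. scal I r t \<in> \<Delta>}" for r
    unfolding Delta_k_r_def \<Delta>_def scal_def I_def by (rule refl)
  have Dr: "Delta_k_r r E k P = \<Delta> \<inter> (scal I r -` \<Delta> \<inter> space L)" for r
    unfolding Dr' using \<Delta>L by blast
  have Drs: "Delta_k_r r E k P \<in> sets L" for r
    unfolding Dr using \<Delta>s measurable_sets[OF scal_meas \<Delta>s[unfolded L_def]] unfolding L_def by blast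
  have s\<nu>: "sets \<nu> = sets L" unfolding nuf by (rule sets_density)
  have main: "emeasure \<nu> (Delta_k_r r1 E k P \<inter> Delta_k_r r2 E k P) > 0"
    if r: "1-\<delta> < r1" "r1 \<le> 1" "1-\<delta> < r2" "r2 \<le> 1" for r1 r2
  proof -
    obtain H where H: "H \<in> sets L" "H \<subseteq> G0 \<inter> box n"
      "\<forall>t\<in>H. scal I r1 t \<in> G0 \<inter> box n \<and> scal I r2 t \<in> G0 \<inter> box n" "emeasure L H > 0"
      using key[OF r] by blast
    have sub: "H \<subseteq> Delta_k_r r1 E k P \<inter> Delta_k_r r2 E k P"
      using H(2,3) unfolding Dr' G0_def by blast
    have "emeasure \<nu> H > 0" using posH[OF H(1) _ H(4)] H(2) by blast
    also have "emeasure \<nu> H \<le> emeasure \<nu> (Delta_k_r r1 E k P \<inter> Delta_k_r r2 E k P)"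
      by (rule emeasure_mono[OF sub]) (simp only: s\<nu> Drs sets.Int)
    finally show ?thesis .
  qed
  define \<delta>1 where "\<delta>1 = min \<delta> 1"
  have \<delta>1: "0 < \<delta>1" "\<delta>1 \<le> \<delta>" "\<delta>1 \<le> 1" unfolding \<delta>1_def using \<delta> by auto
  have part1: "\<exists>r1 r2. 0 < r1 \<and> 0 < r2 \<and> r1 \<noteq> r2 \<and>
            emeasure (nu_k \<mu> k P) (Delta_k_r r1 E k P \<inter> Delta_k_r r2 E k P) > 0"
  proof -
    have m: "emeasure \<nu> (Delta_k_r 1 E k P \<inter> Delta_k_r (1 - \<delta>1/2) E k P) > 0"
      by (rule main) (use \<delta>1 in linarith)+
    have "0 < (1::real)" "0 < 1 - \<delta>1/2" "(1::real) \<noteq> 1 - \<delta>1/2" using \<delta>1 by linarith+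
    then show ?thesis using m unfolding \<nu>_def by blast
  qed
  have part2: "\<exists>\<alpha>1\<in>A. \<exists>\<alpha>2\<in>A. \<exists>r1\<in>R \<alpha>1. \<exists>r2\<in>R \<alpha>2. \<alpha>1 \<noteq> \<alpha>2 \<and>
                  emeasure (nu_k \<mu> k P) (Delta_k_r r1 E k P \<inter> Delta_k_r r2 E k P) > 0"
    if AR: "(\<Union>\<alpha>\<in>A. R \<alpha>) = {0<..}" "\<forall>\<alpha>\<in>A. R \<alpha> \<noteq> {} \<and> countable (R \<alpha>)"
    for A :: "'a set" and R
  proof -
    have "(1::real) \<in> (\<Union>\<alpha>\<in>A. R \<alpha>)" using AR(1) by simp
    then obtain \<alpha>1 where a1: "\<alpha>1 \<in> A" "1 \<in> R \<alpha>1" by blast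
    have "\<not> {1-\<delta>1<..<1} \<subseteq> R \<alpha>1"
    proof
      assume "{1-\<delta>1<..<1} \<subseteq> R \<alpha>1"
      then have "countable {1-\<delta>1<..<(1::real)}" using AR(2) a1(1) countable_subset by blast
      then show False using uncountable_open_interval[of "1-\<delta>1" 1] \<delta>1 by simp
    qed
    then obtain r where r: "r \<in> {1-\<delta>1<..<1}" "r \<notin> R \<alpha>1" by blast
    then have "r \<in> (\<Union>\<alpha>\<in>A. R \<alpha>)" using AR(1) \<delta>1 by auto
    then obtain \<alpha>2 where a2: "\<alpha>2 \<in> A" "r \<in> R \<alpha>2" by blast
    have ne: "\<alpha>1 \<noteq> \<alpha>2" using a2 r by blast
    have rr: "1 - \<delta>1 < r" "r < 1" using r(1) by auto
    have "emeasure \<nu> (Delta_k_r 1 E k P \<inter> Delta_k_r r E k P) > 0"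
      by (rule main) (use \<delta>1 rr in linarith)+
    then show ?thesis using a1 a2 ne unfolding \<nu>_def by blast
  qed
  show ?thesis
  proof (intro conjI allI impI)
    show "\<exists>r1 r2. 0 < r1 \<and> 0 < r2 \<and> r1 \<noteq> r2 \<and>
            emeasure (nu_k \<mu> k P) (Delta_k_r r1 E k P \<inter> Delta_k_r r2 E k P) > 0" by (rule part1)
  next
    fix A :: "'a set" and R :: "'a \<Rightarrow> real set"
    assume h: "(\<Union>\<alpha>\<in>A. R \<alpha>) = {0<..} \<and> disjoint_family_on R A \<and>
            (\<forall>\<alpha>\<in>A. R \<alpha> \<noteq> {} \<and> countable (R \<alpha>))"
    show "\<exists>\<alpha>1\<in>A. \<exists>\<alpha>2\<in>A. \<exists>r1\<in>R \<alpha>1. \<exists>r2\<in>R \<alpha>2. \<alpha>1 \<noteq> \<alpha>2 \<and>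
                  emeasure (nu_k \<mu> k P) (Delta_k_r r1 E k P \<inter> Delta_k_r r2 E k P) > 0"
      by (rule part2) (use h in simp_all)
  qed
qed


end
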